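(* For every integer $d\geq1$ and positive integer $k$, $\gamma_{gr}^{L,k}(Q_d)\leq 2^d-d+k$.
   Context: $Q_d$ is the $d$-dimensional hypercube: vertices are the $0$-$1$ strings of length $d$, adjacent iff they differ in exactly one position. For a vertex $v$, $N(v)$ is its open neighborhood and $N[v]=N(v)\cup\{v\}$. A sequence $S=(v_1,\ldots,v_m)$ of distinct vertices is a $k$-$L$-sequence if for each $i$ there is $u_i\in N[v_i]$ such that the number of indices $j<i$ with $u_i\in N(v_j)$ is less than $k$. $\gamma_{gr}^{L,k}(G)$ is the maximum length of a $k$-$L$-sequence of $G$. *)

theory Defs
  imports Main
begin

text \<open>A simple graph is given by a vertex set V and a symmetric irreflexive adjacency relation adj.\<close>

definition open_nbhd :: "'a set \<Rightarrow> ('a \<Rightarrow> 'a \<Rightarrow> bool) \<Rightarrow> 'a \<Rightarrow> 'a set" where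
  "open_nbhd V adj v = {u \<in> V. adj v u}"

definition closed_nbhd :: "'a set \<Rightarrow> ('a \<Rightarrow> 'a \<Rightarrow> bool) \<Rightarrow> 'a \<Rightarrow> 'a set" where
  "closed_nbhd V adj v = insert v (open_nbhd V adj v)"

text \<open>S = (v_1,...,v_m) as a list (0-indexed). For each i there is u in N[v_i] such that
  the number of j < i with u in N(v_j) is less than k.\<close>
definition is_k_L_sequence :: "'a set \<Rightarrow> ('a \<Rightarrow> 'a \<Rightarrow> bool) \<Rightarrow> nat \<Rightarrow> 'a list \<Rightarrow> bool" where
  "is_k_L_sequence V adj k S \<longleftrightarrow>
     distinct S \<and> set S \<subseteq> V \<and>
     (\<forall>i < length S. \<exists>u \<in> closed_nbhd V adj (S ! i).
        card {j. j < i \<and> u \<in> open_nbhd V adj (S ! j)} < k)"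

definition gamma_gr_L_k :: "'a set \<Rightarrow> ('a \<Rightarrow> 'a \<Rightarrow> bool) \<Rightarrow> nat \<Rightarrow> nat" where
  "gamma_gr_L_k V adj k = Max {length S | S. is_k_L_sequence V adj k S}"

definition hypercube_vertices :: "nat \<Rightarrow> bool list set" where
  "hypercube_vertices d = {x. length x = d}"

definition hypercube_adj :: "bool list \<Rightarrow> bool list \<Rightarrow> bool" where
  "hypercube_adj x y \<longleftrightarrow> length x = length y \<and> card {i. i < length x \<and> x ! i \<noteq> y ! i} = 1"

end

theory Submission
  imports Defs
begin

definition flipb :: "bool list \<Rightarrow> nat \<Rightarrow> bool list" where
  "flipb u i = u[i := (\<not> u ! i)]"

lemma card_hv: "card (hypercube_vertices d) = 2 ^ d" and fin_hv: "finite (hypercube_vertices d)"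
proof -
  have e: "hypercube_vertices d = {xs. set xs \<subseteq> (UNIV::bool set) \<and> length xs = d}"
    by (auto simp: hypercube_vertices_def)
  show "card (hypercube_vertices d) = 2 ^ d" unfolding e
    by (subst card_lists_length_eq) auto
  show "finite (hypercube_vertices d)" unfolding e
    by (rule finite_lists_length_eq) auto
qed

lemma flip_diff: assumes "i < length u" shows "{j. j < length u \<and> u ! j \<noteq> flipb u i ! j} = {i}"
  using assms by (auto simp: flipb_def nth_list_update)

lemma flip_adj: assumes "i < length u"
  shows "hypercube_adj u (flipb u i)" "hypercube_adj (flipb u i) u"
proof -
  have "{j. j < length u \<and> flipb u i ! j \<noteq> u ! j} = {i}"
    using assms by (auto simp: flipb_def nth_list_update)
  then show "hypercube_adj u (flipb u i)" "hypercube_adj (flipb u i) u"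
    using flip_diff[OF assms] by (auto simp: hypercube_adj_def flipb_def)
qed

lemma flip_inj: "inj_on (flipb u) {..<length u}"
proof (rule inj_onI)
  fix i j assume "i \<in> {..<length u}" "j \<in> {..<length u}" "flipb u i = flipb u j"
  then have "flipb u i ! i = flipb u j ! i" by simp
  then show "i = j" using \<open>i \<in> _\<close> by (cases "i = j") (auto simp: flipb_def nth_list_update)
qed

lemma adj_sym: "hypercube_adj x y \<Longrightarrow> hypercube_adj y x"
proof -
  assume a: "hypercube_adj x y"
  then have "{i. i < length y \<and> y ! i \<noteq> x ! i} = {i. i < length x \<and> x ! i \<noteq> y ! i}"
    by (auto simp: hypercube_adj_def)
  then show ?thesis using a unfolding hypercube_adj_def by metis
qed

lemma main_bound:
  assumes S: "is_k_L_sequence (hypercube_vertices d) hypercube_adj k S"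
  shows "length S \<le> 2 ^ d - d + k"
proof (cases "S = []")
  case True then show ?thesis by simp
next
  case False
  define V where "V = hypercube_vertices d"
  define m where "m = length S"
  have m0: "m - 1 < length S" using False by (simp add: m_def)
  have dist: "distinct S" and sub: "set S \<subseteq> V" using S by (auto simp: is_k_L_sequence_def V_def)
  obtain u where u: "u \<in> closed_nbhd V hypercube_adj (S ! (m - 1))"
    and cJ: "card {j. j < m - 1 \<and> u \<in> open_nbhd V hypercube_adj (S ! j)} < k"
    using S m0 unfolding is_k_L_sequence_def V_def by blast
  define J where "J = {j. j < m - 1 \<and> u \<in> open_nbhd V hypercube_adj (S ! j)}"
  have uV: "u \<in> V" using u m0 sub by (auto simp: closed_nbhd_def open_nbhd_def)
  then have lu: "length u = d" by (simp add: V_def hypercube_vertices_def)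
  define F where "F = flipb u ` {..<d}"
  have cF: "card F = d" unfolding F_def using flip_inj[of u] lu by (simp add: card_image)
  have FV: "F \<subseteq> V" unfolding F_def V_def hypercube_vertices_def flipb_def using lu by auto
  have finV: "finite V" using fin_hv V_def by simp
  define A where "A = set S"
  have finA: "finite A" by (simp add: A_def)
  have "A \<inter> F \<subseteq> insert (S ! (m - 1)) ((\<lambda>j. S ! j) ` J)"
  proof
    fix x assume x: "x \<in> A \<inter> F"
    then obtain j where j: "j < length S" "x = S ! j" by (auto simp: A_def in_set_conv_nth)
    obtain i where i: "i < d" "x = flipb u i" using x F_def by auto
    have ax: "hypercube_adj x u" using flip_adj(2)[of i u] i lu by simp
    show "x \<in> insert (S ! (m - 1)) ((\<lambda>j. S ! j) ` J)"
    proof (cases "j = m - 1")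
      case True then show ?thesis using j by simp
    next
      case False
      then have "j < m - 1" using j m_def by simp
      then have "j \<in> J" using ax j uV by (auto simp: J_def open_nbhd_def)
      then show ?thesis using j by auto
    qed
  qed
  moreover have "finite J" by (simp add: J_def)
  ultimately have "card (A \<inter> F) \<le> card (insert (S ! (m - 1)) ((\<lambda>j. S ! j) ` J))"
    by (intro card_mono) auto
  also have "\<dots> \<le> Suc (card ((\<lambda>j. S ! j) ` J))" by (simp add: card_insert_le_m1)
  also have "\<dots> \<le> Suc (card J)" using \<open>finite J\<close> card_image_le by auto
  finally have c1: "card (A \<inter> F) \<le> k" using cJ J_def by simp
  have "A - F \<subseteq> V - F" using sub A_def by auto
  then have c2: "card (A - F) \<le> 2 ^ d - d"
    using card_mono[OF _ \<open>A - F \<subseteq> V - F\<close>] finV card_Diff_subset[OF _ FV] cF card_hv V_def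
    by (metis finite_Diff finite_subset FV)
  have "card A = card (A \<inter> F) + card (A - F)"
    using finA by (metis card_Int_Diff)
  moreover have "length S = card A" using dist by (simp add: A_def distinct_card)
  ultimately show ?thesis using c1 c2 by linarith
qed

theorem mainTheorem12:
  fixes d k :: nat
  assumes "d \<ge> 1" and "k \<ge> 1"
  shows "gamma_gr_L_k (hypercube_vertices d) hypercube_adj k \<le> 2 ^ d - d + k"
proof -
  let ?L = "{length S | S. is_k_L_sequence (hypercube_vertices d) hypercube_adj k S}"
  have "is_k_L_sequence (hypercube_vertices d) hypercube_adj k []"
    by (simp add: is_k_L_sequence_def)
  then have "0 \<in> ?L" by force
  then have ne: "?L \<noteq> {}" by blast
  have bd: "\<forall>x\<in>?L. x \<le> 2 ^ d - d + k" using main_bound by blast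
  then have "finite ?L" by (meson finite_nat_set_iff_bounded_le)
  then show ?thesis unfolding gamma_gr_L_k_def using ne bd by (simp add: Max_le_iff)
qed

end
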